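(* Let $\mathcal H$ be a Hilbert space, let $J$ be a directed set, let $\{U_j\}_{j\in J}$ be a net of unitary operators on $\mathcal H$, and let $\{\ell_j\}_{j\in J}\subset[0,\infty)$ satisfy $\ell_j\to\infty$. Assume there exists a self-adjoint operator $A$ in $\mathcal H$ such that $U_j\in C^1(A)$ for each $j\in J$, and suppose that the strong limit $$D:=\operatorname{s-lim}_j\frac{1}{\ell_j}[A,U_j]U_j^{-1}$$ exists (the operators being defined for $j$ large enough that $\ell_j\neq0$). Then $\lim_j\langle\varphi,U_j\psi\rangle=0$ for all $\varphi\in\ker(D)^\perp$ and all $\psi\in\mathcal H$.
   Context: The scalar product $\langle\cdot,\cdot\rangle$ is antilinear in the first argument. For a self-adjoint operator $A$ with domain $\mathrm{dom}(A)$ and a bounded operator $S$ on $\mathcal H$, one writes $S\in C^1(A)$ if the map $\mathbb R\ni t\mapsto e^{-itA}Se^{itA}$ is strongly continuously differentiable; equivalently, the quadratic form $\mathrm{dom}(A)\ni\varphi\mapsto\langle A\varphi,S\varphi\rangle-\langle \varphi,SA\varphi\rangle$ is continuous for the topology of $\mathcal H$. In that case $[A,S]$ denotes the bounded operator associated with the continuous extension of this form (i.e. $[A,S]=AS-SA$ in the form sense on $\mathrm{dom}(A)$). *)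

theory Defs
  imports "HOL-Analysis.Analysis"
begin

text \<open>The scalar product is antilinear in the first argument, linear in the second.\<close>

class complex_inner = real_normed_vector +
  fixes scaleC :: "complex \<Rightarrow> 'a \<Rightarrow> 'a" (infixr "*\<^sub>C" 75)
    and cinner :: "'a \<Rightarrow> 'a \<Rightarrow> complex"
  assumes scaleC_add_right: "a *\<^sub>C (x + y) = a *\<^sub>C x + a *\<^sub>C y"
    and scaleC_add_left: "(a + b) *\<^sub>C x = a *\<^sub>C x + b *\<^sub>C x"
    and scaleC_scaleC: "a *\<^sub>C (b *\<^sub>C x) = (a * b) *\<^sub>C x"
    and scaleC_one: "1 *\<^sub>C x = x"
    and scaleR_scaleC: "scaleR r x = complex_of_real r *\<^sub>C x"
    and cinner_add_right: "cinner x (y + z) = cinner x y + cinner x z"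
    and cinner_scaleC_right: "cinner x (a *\<^sub>C y) = a * cinner x y"
    and cinner_commute: "cinner x y = cnj (cinner y x)"
    and cinner_pos: "x \<noteq> 0 \<Longrightarrow> Re (cinner x x) > 0"
    and norm_eq_sqrt_cinner: "norm x = sqrt (Re (cinner x x))"

class chilbert_space = complex_inner + complete_space

definition csubspace :: "'a::complex_inner set \<Rightarrow> bool" where
  "csubspace S \<longleftrightarrow> 0 \<in> S \<and> (\<forall>x\<in>S. \<forall>y\<in>S. x + y \<in> S) \<and> (\<forall>c. \<forall>x\<in>S. c *\<^sub>C x \<in> S)"

definition bounded_clinear :: "('a::complex_inner \<Rightarrow> 'b::complex_inner) \<Rightarrow> bool" where
  "bounded_clinear f \<longleftrightarrow>
     (\<forall>x y. f (x + y) = f x + f y) \<and> (\<forall>c x. f (c *\<^sub>C x) = c *\<^sub>C f x) \<and>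
     (\<exists>K. \<forall>x. norm (f x) \<le> norm x * K)"

definition unitary :: "('a::complex_inner \<Rightarrow> 'a) \<Rightarrow> bool" where
  "unitary U \<longleftrightarrow> bounded_clinear U \<and> surj U \<and> (\<forall>x y. cinner (U x) (U y) = cinner x y)"

text \<open>Self-adjoint (possibly unbounded) operator A with domain Dom: densely defined,
  linear on its domain, and equal to its adjoint (same domain, same action).\<close>
definition self_adjoint :: "('a::complex_inner \<Rightarrow> 'a) \<Rightarrow> 'a set \<Rightarrow> bool" where
  "self_adjoint A Dom \<longleftrightarrow>
     csubspace Dom \<and> closure Dom = UNIV \<and>
     (\<forall>x\<in>Dom. \<forall>y\<in>Dom. A (x + y) = A x + A y) \<and>
     (\<forall>c. \<forall>x\<in>Dom. A (c *\<^sub>C x) = c *\<^sub>C A x) \<and>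
     (\<forall>\<psi>. \<psi> \<in> Dom \<longleftrightarrow> (\<exists>\<eta>. \<forall>\<phi>\<in>Dom. cinner \<psi> (A \<phi>) = cinner \<eta> \<phi>)) \<and>
     (\<forall>\<psi>\<in>Dom. \<forall>\<phi>\<in>Dom. cinner \<psi> (A \<phi>) = cinner (A \<psi>) \<phi>)"

text \<open>S \<in> C^1(A): S bounded and the quadratic form
  \<phi> \<mapsto> <A\<phi>, S\<phi>> - <\<phi>, S A \<phi>> on Dom(A) is continuous for the topology of H,
  i.e. it is the restriction of the form of a bounded operator.\<close>
definition C1 :: "('a::complex_inner \<Rightarrow> 'a) \<Rightarrow> 'a set \<Rightarrow> ('a \<Rightarrow> 'a) \<Rightarrow> bool" where
  "C1 A Dom S \<longleftrightarrow> bounded_clinear S \<and>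
     (\<exists>B. bounded_clinear B \<and>
        (\<forall>\<phi>\<in>Dom. cinner \<phi> (B \<phi>) = cinner (A \<phi>) (S \<phi>) - cinner \<phi> (S (A \<phi>))))"

text \<open>The commutator [A,S]: the bounded operator associated with the continuous extension
  of the above form (unique by density of Dom and polarization).\<close>
definition commutator :: "('a::complex_inner \<Rightarrow> 'a) \<Rightarrow> 'a set \<Rightarrow> ('a \<Rightarrow> 'a) \<Rightarrow> ('a \<Rightarrow> 'a)" where
  "commutator A Dom S = (THE B. bounded_clinear B \<and>
        (\<forall>\<phi>\<in>Dom. cinner \<phi> (B \<phi>) = cinner (A \<phi>) (S \<phi>) - cinner \<phi> (S (A \<phi>))))"

definition orth_compl :: "'a::complex_inner set \<Rightarrow> 'a set" where
  "orth_compl S = {\<phi>. \<forall>x\<in>S. cinner x \<phi> = 0}"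

definition directed_set :: "('j \<Rightarrow> 'j \<Rightarrow> bool) \<Rightarrow> bool" where
  "directed_set le \<longleftrightarrow> (\<forall>a. le a a) \<and> (\<forall>a b c. le a b \<longrightarrow> le b c \<longrightarrow> le a c) \<and>
     (\<forall>a b. \<exists>c. le a c \<and> le b c)"

text \<open>The filter of tails of a net indexed by the directed set (UNIV, le).\<close>
definition net :: "('j \<Rightarrow> 'j \<Rightarrow> bool) \<Rightarrow> 'j filter" where
  "net le = (INF k. principal {j. le k j})"

end

theory Submission
  imports Defs
begin

lemma cinner_add_left: "cinner (x+y) (z::'a::complex_inner) = cinner x z + cinner y z"
  by (metis cinner_add_right cinner_commute complex_cnj_add)

lemma cinner_scaleC_left: "cinner (a *\<^sub>C x) (y::'a::complex_inner) = cnj a * cinner x y"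
  by (metis cinner_commute cinner_scaleC_right complex_cnj_mult complex_cnj_cnj)

lemma cinner_zero_right[simp]: "cinner (x::'a::complex_inner) 0 = 0"
  using cinner_add_right[of x 0 0] by simp

lemma cinner_zero_left[simp]: "cinner 0 (x::'a::complex_inner) = 0"
  using cinner_add_left[of 0 0 x] by simp

lemma cinner_minus_right: "cinner (x::'a::complex_inner) (- y) = - cinner x y"
  using cinner_add_right[of x y "-y"] by (simp add: eq_neg_iff_add_eq_0 add.commute)

lemma cinner_minus_left: "cinner (- x) (y::'a::complex_inner) = - cinner x y"
  using cinner_add_left[of x "-x" y] by (simp add: eq_neg_iff_add_eq_0 add.commute)

lemma cinner_diff_right: "cinner (x::'a::complex_inner) (y - z) = cinner x y - cinner x z"
  using cinner_add_right[of x y "-z"] cinner_minus_right[of x z] by simp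

lemma cinner_diff_left: "cinner (x - y) (z::'a::complex_inner) = cinner x z - cinner y z"
  using cinner_add_left[of x "-y" z] cinner_minus_left[of y z] by simp

lemma scaleC_of_real: "complex_of_real r *\<^sub>C (x::'a::complex_inner) = r *\<^sub>R x"
  by (simp add: scaleR_scaleC)

lemma cinner_self_Im: "Im (cinner x (x::'a::complex_inner)) = 0"
  proof -
  have "Im (cinner x x) = Im (cnj (cinner x x))" by (metis cinner_commute)
  then show ?thesis by simp
qed

lemma cinner_self_Re_ge: "Re (cinner x (x::'a::complex_inner)) \<ge> 0"
  using cinner_pos[of x] by (cases "x = 0") auto

lemma norm_sq_cinner: "(norm (x::'a::complex_inner))^2 = Re (cinner x x)"
  using norm_eq_sqrt_cinner[of x] cinner_self_Re_ge[of x] by simp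

lemma cinner_self: "cinner x (x::'a::complex_inner) = complex_of_real ((norm x)^2)"
  using norm_sq_cinner[of x] cinner_self_Im[of x] by (simp add: complex_eq_iff)

lemma cinner_self_eq_0: "cinner x (x::'a::complex_inner) = 0 \<longleftrightarrow> x = 0"
  by (simp add: cinner_self)

lemma norm_scaleC: "norm (a *\<^sub>C (x::'a::complex_inner)) = cmod a * norm x"
proof -
  have "(norm (a *\<^sub>C x))^2 = Re (cinner (a *\<^sub>C x) (a *\<^sub>C x))" by (rule norm_sq_cinner)
  also have "\<dots> = Re ((a * cnj a) * cinner x x)"
    by (simp add: cinner_scaleC_left cinner_scaleC_right mult.assoc mult.left_commute)
  also have "\<dots> = (cmod a * norm x)^2"
    by (simp only: complex_norm_square[symmetric] cinner_self of_real_mult[symmetric] Re_complex_of_real power_mult_distrib)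
  finally show ?thesis by (simp add: power2_eq_iff_nonneg)
qed

lemma norm_add_sq: "(norm (x + (y::'a::complex_inner)))^2 = (norm x)^2 + 2 * Re (cinner x y) + (norm y)^2"
proof -
  have "Re (cinner y x) = Re (cnj (cinner x y))" by (metis cinner_commute)
  then have "Re (cinner y x) = Re (cinner x y)" by simp
  then show ?thesis
    by (simp add: norm_sq_cinner cinner_add_left cinner_add_right)
qed

lemma norm_add_scaleC_sq: "(norm (v + t *\<^sub>C (y::'a::complex_inner)))^2 = (norm v)^2 + 2 * Re (t * cinner v y) + (cmod t)^2 * (norm y)^2"
  by (simp add: norm_add_sq cinner_scaleC_right norm_scaleC power_mult_distrib)

lemma cinner_bound_aux:
  fixes v y :: "'a::complex_inner"
  assumes "\<And>t. (norm (v + t *\<^sub>C y))^2 \<ge> (norm v)^2 - e"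
  shows "(cmod (cinner y v))^2 \<le> e * (norm y)^2"
proof (cases "y = 0")
  case True then show ?thesis using assms[of 0] by simp
next
  case False
  define a where "a = cinner y v"
  define n where "n = (norm y)^2"
  have n: "n > 0" using False by (simp add: n_def)
  define t where "t = - a / complex_of_real n"
  have cv: "cinner v y = cnj a" by (simp add: a_def cinner_commute[of v y])
  have "t * cinner v y = - complex_of_real ((cmod a)^2 / n)"
  proof -
    have "a * cnj a = complex_of_real ((cmod a)^2)" by (rule complex_norm_square[symmetric])
    then show ?thesis by (simp add: t_def cv)
  qed
  then have r1: "Re (t * cinner v y) = - ((cmod a)^2 / n)" by simp
  have r2: "(cmod t)^2 = (cmod a)^2 / n^2" using n by (simp add: t_def norm_divide power_divide)
  have "(norm v)^2 - e \<le> (norm v)^2 + 2 * (- ((cmod a)^2 / n)) + (cmod a)^2 / n^2 * n"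
    using assms[of t] unfolding norm_add_scaleC_sq r1 r2 n_def[symmetric] .
  also have "(cmod a)^2 / n^2 * n = (cmod a)^2 / n" using n by (simp add: power2_eq_square)
  finally have "(cmod a)^2 / n \<le> e" by simp
  then show ?thesis using n by (simp add: a_def n_def[symmetric] divide_le_eq mult.commute)
qed

lemma cauchy_schwarz: "cmod (cinner x (y::'a::complex_inner)) \<le> norm x * norm y"
proof -
  have "(cmod (cinner x y))^2 \<le> (norm y)^2 * (norm x)^2"
    by (rule cinner_bound_aux[where e="(norm y)^2"]) simp
  then show ?thesis by (simp add: power_mult_distrib[symmetric] power2_le_iff_abs_le mult.commute)
qed

lemma bl_cinner_right: "bounded_linear (\<lambda>y. cinner (x::'a::complex_inner) y)"
proof (rule bounded_linear_intro[where K="norm x"])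
  fix y z show "cinner x (y + z) = cinner x y + cinner x z" by (rule cinner_add_right)
next
  fix r y show "cinner x (r *\<^sub>R y) = r *\<^sub>R cinner x y"
    by (simp add: scaleR_scaleC cinner_scaleC_right scaleR_conv_of_real)
next
  fix y show "norm (cinner x y) \<le> norm y * norm x"
    using cauchy_schwarz[of x y] by (simp add: mult.commute)
qed

lemma bl_cinner_left: "bounded_linear (\<lambda>y. cinner y (x::'a::complex_inner))"
proof (rule bounded_linear_intro[where K="norm x"])
  fix y z show "cinner (y + z) x = cinner y x + cinner z x" by (rule cinner_add_left)
next
  fix r y show "cinner (r *\<^sub>R y) x = r *\<^sub>R cinner y x"
    by (simp add: scaleR_scaleC cinner_scaleC_left scaleR_conv_of_real)
next
  fix y show "norm (cinner y x) \<le> norm y * norm x"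
    using cauchy_schwarz[of y x] by simp
qed

lemma bl_scaleC: "bounded_linear (\<lambda>v. c *\<^sub>C (v::'a::complex_inner))"
proof (rule bounded_linear_intro[where K="cmod c"])
  fix y z show "c *\<^sub>C (y + z) = c *\<^sub>C y + c *\<^sub>C z" by (rule scaleC_add_right)
next
  fix r y show "c *\<^sub>C (r *\<^sub>R y) = r *\<^sub>R (c *\<^sub>C y)"
    by (simp add: scaleR_scaleC scaleC_scaleC mult.commute)
next
  fix y show "norm (c *\<^sub>C y) \<le> norm y * cmod c"
    by (simp add: norm_scaleC mult.commute)
qed

lemma bcl_bl: assumes "bounded_clinear T" shows "bounded_linear T"
proof -
  obtain K where "\<forall>x. norm (T x) \<le> norm x * K" using assms unfolding bounded_clinear_def by blast
  then show ?thesis using assms unfolding bounded_clinear_def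
    by (intro bounded_linear_intro[where K=K]) (auto simp: scaleR_scaleC)
qed

lemma bcl_add: "bounded_clinear T \<Longrightarrow> T (x + y) = T x + T y"
  unfolding bounded_clinear_def by blast

lemma bcl_scaleC: "bounded_clinear T \<Longrightarrow> T (c *\<^sub>C x) = c *\<^sub>C T x"
  unfolding bounded_clinear_def by blast

lemma bcl_bound: "bounded_clinear T \<Longrightarrow> \<exists>K. \<forall>x. norm (T x) \<le> norm x * K"
  unfolding bounded_clinear_def by blast

lemma bcl_diff: "bounded_clinear T \<Longrightarrow> T (x - y) = T x - T y"
  using bcl_bl linear_diff bounded_linear.linear by blast

lemma bcl_zero: "bounded_clinear T \<Longrightarrow> T 0 = 0"
  using bcl_bl linear_0 bounded_linear.linear by blast

lemma unitary_norm: "unitary U \<Longrightarrow> norm (U x) = norm x"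
  unfolding unitary_def by (metis norm_sq_cinner norm_ge_zero power2_eq_iff_nonneg)

lemma unitary_inj: assumes "unitary U" shows "inj U"
proof (rule injI)
  fix x y assume "U x = U y"
  then have "U (x - y) = 0" using assms unfolding unitary_def by (simp add: bcl_diff)
  then have "norm (x - y) = 0" using unitary_norm[OF assms, of "x - y"] by simp
  then show "x = y" by simp
qed

lemma unitary_surj: "unitary U \<Longrightarrow> surj U" unfolding unitary_def by blast

lemma unitary_bcl: "unitary U \<Longrightarrow> bounded_clinear U" unfolding unitary_def by blast

lemma unitary_inv_right: "unitary U \<Longrightarrow> U (inv U y) = y"
  by (meson surj_f_inv_f unitary_surj)

lemma unitary_inv_left: "unitary U \<Longrightarrow> inv U (U x) = x"
  by (meson inv_f_f unitary_inj)

lemma unitary_cinner: "unitary U \<Longrightarrow> cinner (U x) (U y) = cinner x y"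
  unfolding unitary_def by blast

lemma unitary_adj1: "unitary U \<Longrightarrow> cinner (inv U y) x = cinner y (U x)"
  by (metis unitary_cinner unitary_inv_right)

lemma unitary_adj2: "unitary U \<Longrightarrow> cinner x (inv U y) = cinner (U x) y"
  by (metis unitary_cinner unitary_inv_right)

lemma unitary_inv_norm: "unitary U \<Longrightarrow> norm (inv U y) = norm y"
  by (metis unitary_inv_right unitary_norm)

lemma unitary_inv_bcl: assumes U: "unitary U" shows "bounded_clinear (inv U)"
  unfolding bounded_clinear_def
proof (intro conjI allI exI)
  fix x y
  have "U (inv U x + inv U y) = x + y"
    using bcl_add[OF unitary_bcl[OF U]] unitary_inv_right[OF U] by simp
  then show "inv U (x + y) = inv U x + inv U y"
    using unitary_inv_left[OF U, of "inv U x + inv U y"] by simp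
next
  fix c x
  have "U (c *\<^sub>C inv U x) = c *\<^sub>C x"
    using bcl_scaleC[OF unitary_bcl[OF U]] unitary_inv_right[OF U] by simp
  then show "inv U (c *\<^sub>C x) = c *\<^sub>C inv U x"
    using unitary_inv_left[OF U, of "c *\<^sub>C inv U x"] by simp
next
  fix x show "norm (inv U x) \<le> norm x * 1" using unitary_inv_norm[OF U] by simp
qed

lemma dense_zero:
  assumes "closure S = UNIV" "bounded_linear f" "\<And>x. x \<in> S \<Longrightarrow> f x = 0"
  shows "f x = 0"
  using continuous_constant_on_closure[of S f 0 x] assms linear_continuous_on by auto

lemma dense_orth:
  fixes v :: "'a::complex_inner"
  assumes "closure S = UNIV" "\<And>x. x \<in> S \<Longrightarrow> cinner x v = 0"
  shows "v = 0"
proof -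
  have "cinner v v = 0" by (rule dense_zero[OF assms(1) bl_cinner_left]) (rule assms(2))
  then show ?thesis by (simp add: cinner_self_eq_0)
qed

lemma polarization:
  assumes S: "csubspace S"
    and a1: "\<And>x y z. x\<in>S \<Longrightarrow> y\<in>S \<Longrightarrow> z\<in>S \<Longrightarrow> F (x+y) z = F x z + F y z"
    and a2: "\<And>x y z. x\<in>S \<Longrightarrow> y\<in>S \<Longrightarrow> z\<in>S \<Longrightarrow> F x (y+z) = F x y + F x z"
    and s1: "\<And>c x y. x\<in>S \<Longrightarrow> y\<in>S \<Longrightarrow> F (c *\<^sub>C x) y = cnj c * F x y"
    and s2: "\<And>c x y. x\<in>S \<Longrightarrow> y\<in>S \<Longrightarrow> F x (c *\<^sub>C y) = c * F x y"
    and z: "\<And>x. x\<in>S \<Longrightarrow> F x x = (0::complex)"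
    and x: "x \<in> S" and y: "y \<in> S"
  shows "F x y = 0"
proof -
  have cl: "\<And>u v. u\<in>S \<Longrightarrow> v\<in>S \<Longrightarrow> u + v \<in> S" "\<And>c u. u\<in>S \<Longrightarrow> c *\<^sub>C u \<in> S"
    using S unfolding csubspace_def by auto
  have e1: "F x y + F y x = 0"
    using z[OF cl(1)[OF x y]] a1[OF x y] a2 z[OF x] z[OF y] x y cl by (simp add: add.commute)
  have iy: "\<i> *\<^sub>C y \<in> S" using cl(2) y by blast
  have "F x (\<i> *\<^sub>C y) + F (\<i> *\<^sub>C y) x = 0"
    using z[OF cl(1)[OF x iy]] a1[OF x iy] a2 z[OF x] z[OF iy] x iy cl by (simp add: add.commute)
  then have e2: "\<i> * F x y - \<i> * F y x = 0" using s1[OF y x] s2[OF x y] by simp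
  then have "\<i> * (F x y - F y x) = 0" by (simp add: right_diff_distrib)
  then have "F y x = F x y" by simp
  with e1 show ?thesis by simp
qed

lemma sa_props:
  assumes "self_adjoint A Dom"
  shows "csubspace Dom" "closure Dom = UNIV"
    "\<And>x y. x\<in>Dom \<Longrightarrow> y\<in>Dom \<Longrightarrow> A (x + y) = A x + A y"
    "\<And>c x. x\<in>Dom \<Longrightarrow> A (c *\<^sub>C x) = c *\<^sub>C A x"
    "\<And>\<psi>. \<psi> \<in> Dom \<longleftrightarrow> (\<exists>\<eta>. \<forall>\<phi>\<in>Dom. cinner \<psi> (A \<phi>) = cinner \<eta> \<phi>)"
    "\<And>\<psi> \<phi>. \<psi>\<in>Dom \<Longrightarrow> \<phi>\<in>Dom \<Longrightarrow> cinner \<psi> (A \<phi>) = cinner (A \<psi>) \<phi>"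
  using assms unfolding self_adjoint_def by blast+

lemma csub_add: "csubspace S \<Longrightarrow> x \<in> S \<Longrightarrow> y \<in> S \<Longrightarrow> x + y \<in> S"
  unfolding csubspace_def by blast
lemma csub_scaleC: "csubspace S \<Longrightarrow> x \<in> S \<Longrightarrow> c *\<^sub>C x \<in> S"
  unfolding csubspace_def by blast
lemma csub_zero: "csubspace S \<Longrightarrow> 0 \<in> S"
  unfolding csubspace_def by blast

lemma sesq_from_quad:
  assumes SA: "self_adjoint A Dom" and S: "bounded_clinear S" and B: "bounded_clinear B"
    and q: "\<forall>\<phi>\<in>Dom. cinner \<phi> (B \<phi>) = cinner (A \<phi>) (S \<phi>) - cinner \<phi> (S (A \<phi>))"
    and x: "x \<in> Dom" and y: "y \<in> Dom"
  shows "cinner x (B y) = cinner (A x) (S y) - cinner x (S (A y))"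
proof -
  note sa = sa_props[OF SA]
  define F where "F = (\<lambda>x y. cinner x (B y) - cinner (A x) (S y) + cinner x (S (A y)))"
  have "F x y = 0"
  proof (rule polarization[OF sa(1)])
    fix x y z assume "x\<in>Dom" "y\<in>Dom" "z\<in>Dom"
    then show "F (x + y) z = F x z + F y z"
      by (simp add: F_def sa(3) cinner_add_left)
  next
    fix x y z assume "x\<in>Dom" "y\<in>Dom" "z\<in>Dom"
    then show "F x (y + z) = F x y + F x z"
      by (simp add: F_def sa(3) cinner_add_right bcl_add[OF S] bcl_add[OF B])
  next
    fix c x y assume "x\<in>Dom" "y\<in>Dom"
    then show "F (c *\<^sub>C x) y = cnj c * F x y"
      by (simp add: F_def sa(4) cinner_scaleC_left algebra_simps)
  next
    fix c x y assume "x\<in>Dom" "y\<in>Dom"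
    then show "F x (c *\<^sub>C y) = c * F x y"
      by (simp add: F_def sa(4) cinner_scaleC_right bcl_scaleC[OF S] bcl_scaleC[OF B] algebra_simps)
  next
    fix x assume "x \<in> Dom" then show "F x x = 0" using q by (simp add: F_def)
  qed (use x y in auto)
  then show ?thesis by (simp add: F_def algebra_simps)
qed

lemma quad_unique:
  assumes SA: "self_adjoint A Dom" and S: "bounded_clinear S"
    and B1: "bounded_clinear B1" and q1: "\<forall>\<phi>\<in>Dom. cinner \<phi> (B1 \<phi>) = cinner (A \<phi>) (S \<phi>) - cinner \<phi> (S (A \<phi>))"
    and B2: "bounded_clinear B2" and q2: "\<forall>\<phi>\<in>Dom. cinner \<phi> (B2 \<phi>) = cinner (A \<phi>) (S \<phi>) - cinner \<phi> (S (A \<phi>))"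
  shows "B1 = B2"
proof
  fix zz
  note sa = sa_props[OF SA]
  have e1: "cinner x (B1 y) - cinner x (B2 y) = 0" if "x \<in> Dom" "y \<in> Dom" for x y
    using sesq_from_quad[OF SA S B1 q1 that] sesq_from_quad[OF SA S B2 q2 that] by simp
  have e2: "cinner x (B1 y) - cinner x (B2 y) = 0" if "x \<in> Dom" for x y
  proof (rule dense_zero[OF sa(2), where f="\<lambda>y. cinner x (B1 y) - cinner x (B2 y)"])
    show "bounded_linear (\<lambda>y. cinner x (B1 y) - cinner x (B2 y))"
      by (intro bounded_linear_sub bounded_linear_compose[OF bl_cinner_right] bcl_bl B1 B2)
  qed (use e1 that in auto)
  have "B1 zz - B2 zz = 0"
    by (rule dense_orth[OF sa(2)]) (use e2 in \<open>simp add: cinner_diff_right\<close>)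
  then show "B1 zz = B2 zz" by simp
qed

lemma commutator_props:
  assumes SA: "self_adjoint A Dom" and C: "C1 A Dom S"
  shows "bounded_clinear (commutator A Dom S)"
    and "\<And>x y. x \<in> Dom \<Longrightarrow> y \<in> Dom \<Longrightarrow>
       cinner x (commutator A Dom S y) = cinner (A x) (S y) - cinner x (S (A y))"
proof -
  have S: "bounded_clinear S" using C unfolding C1_def by blast
  let ?P = "\<lambda>B. bounded_clinear B \<and>
        (\<forall>\<phi>\<in>Dom. cinner \<phi> (B \<phi>) = cinner (A \<phi>) (S \<phi>) - cinner \<phi> (S (A \<phi>)))"
  have ex: "\<exists>B. ?P B" using C unfolding C1_def by blast
  have "\<exists>!B. ?P B" using ex quad_unique[OF SA S] by blast
  then have P: "?P (commutator A Dom S)" unfolding commutator_def by (rule theI')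
  then show "bounded_clinear (commutator A Dom S)" by blast
  fix x y assume "x \<in> Dom" "y \<in> Dom"
  then show "cinner x (commutator A Dom S y) = cinner (A x) (S y) - cinner x (S (A y))"
    using sesq_from_quad[OF SA S] P by blast
qed

lemma scaleC_minus_left: "(- c) *\<^sub>C (y::'a::complex_inner) = - (c *\<^sub>C y)"
proof -
  have "c *\<^sub>C y + (- c) *\<^sub>C y = (c + - c) *\<^sub>C y" by (rule scaleC_add_left[symmetric])
  also have "\<dots> = 0" using scaleR_scaleC[of 0 y] by simp
  finally have "c *\<^sub>C y + (- c) *\<^sub>C y = 0" .
  then show ?thesis by (simp add: eq_neg_iff_add_eq_0 add.commute)
qed

lemma csub_diff_scaleC: "x \<in> M \<Longrightarrow> y \<in> M \<Longrightarrow> csubspace M \<Longrightarrow> x - t *\<^sub>C y \<in> M"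
  using csub_add[of M x "(-t) *\<^sub>C y"] csub_scaleC[of M y "-t"] by (simp add: scaleC_minus_left)

lemma projection:
  fixes w :: "'a::chilbert_space"
  assumes M: "csubspace M"
  shows "\<exists>p \<in> closure M. \<forall>y\<in>M. cinner y (w - p) = 0"
proof -
  define d where "d = Inf ((\<lambda>x. (norm (w - x))^2) ` M)"
  have ne: "(\<lambda>x. (norm (w - x))^2) ` M \<noteq> {}" using csub_zero[OF M] by blast
  have bdd: "bdd_below ((\<lambda>x. (norm (w - x))^2) ` M)"
    by (rule bdd_belowI[where m=0]) auto
  have low: "d \<le> (norm (w - x))^2" if "x \<in> M" for x
    unfolding d_def by (rule cInf_lower) (use that bdd in auto)
  have "\<exists>x\<in>M. (norm (w - x))^2 < d + 1 / real (Suc n)" for n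
  proof -
    have "Inf ((\<lambda>x. (norm (w - x))^2) ` M) < d + 1 / real (Suc n)" by (simp add: d_def)
    from cInf_lessD[OF ne this] show ?thesis by blast
  qed
  then obtain X where X: "\<And>n. X n \<in> M" "\<And>n. (norm (w - X n))^2 < d + 1 / real (Suc n)"
    by metis
  have pd: "(norm (X n - X m))^2 \<le> 2 / real (Suc m) + 2 / real (Suc n)" for m n
  proof -
    define a where "a = w - X m"
    define b where "b = w - X n"
    define mid where "mid = (1/2::real) *\<^sub>R (X m + X n)"
    have midM: "mid \<in> M" unfolding mid_def scaleR_scaleC
      by (intro csub_scaleC[OF M] csub_add[OF M] X)
    have ab: "a + b = 2 *\<^sub>R (w - mid)" by (simp add: a_def b_def mid_def algebra_simps scaleR_2)
    have "(norm (a + b))^2 = 4 * (norm (w - mid))^2"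
      by (simp add: ab power_mult_distrib)
    then have "(norm (a + b))^2 \<ge> 4 * d" using low[OF midM] by simp
    moreover have "(norm (a - b))^2 = 2 * (norm a)^2 + 2 * (norm b)^2 - (norm (a + b))^2"
      using norm_add_sq[of a b] norm_add_sq[of a "-b"] by (simp add: cinner_minus_right)
    moreover have "a - b = X n - X m" by (simp add: a_def b_def)
    ultimately show ?thesis using X(2)[of m] X(2)[of n] unfolding a_def[symmetric] b_def[symmetric]
      by simp
  qed
  have "Cauchy X"
  proof (rule metric_CauchyI)
    fix e :: real assume e: "e > 0"
    obtain N :: nat where N: "4 / e^2 < real N" using reals_Archimedean2 by blast
    have NN: "4 / real (Suc N) < e^2"
    proof -
      have "4 < e^2 * real N" using N e by (simp add: divide_less_eq mult.commute)
      also have "\<dots> \<le> e^2 * real (Suc N)" using e by simp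
      finally show ?thesis by (simp add: divide_less_eq)
    qed
    show "\<exists>M. \<forall>m\<ge>M. \<forall>n\<ge>M. dist (X m) (X n) < e"
    proof (intro exI allI impI)
      fix m n assume mn: "N \<le> m" "N \<le> n"
      have "2 / real (Suc m) \<le> 2 / real (Suc N)" "2 / real (Suc n) \<le> 2 / real (Suc N)"
        using mn by (simp_all add: frac_le)
      then have "(norm (X n - X m))^2 < e^2" using pd[of n m] NN by simp
      then have "norm (X n - X m) < e" using e by (simp add: power_less_imp_less_base)
      then show "dist (X m) (X n) < e" by (simp add: dist_norm norm_minus_commute)
    qed
  qed
  then obtain p where p: "X \<longlonglongrightarrow> p" using Cauchy_convergent_iff convergent_def by blast
  have pM: "p \<in> closure M" unfolding closure_sequential using X(1) p by blast
  have "cinner y (w - p) = 0" if y: "y \<in> M" for y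
  proof -
    have l1: "(\<lambda>n. cinner y (w - X n)) \<longlonglongrightarrow> cinner y (w - p)"
      by (intro bounded_linear.tendsto[OF bl_cinner_right] tendsto_diff tendsto_const p)
    have bnd: "(cmod (cinner y (w - X n)))^2 \<le> (1 / real (Suc n)) * (norm y)^2" for n
    proof (rule cinner_bound_aux)
      fix t
      have "X n - t *\<^sub>C y \<in> M" using X(1) y M by (rule csub_diff_scaleC)
      then have "d \<le> (norm (w - (X n - t *\<^sub>C y)))^2" by (rule low)
      moreover have "w - (X n - t *\<^sub>C y) = (w - X n) + t *\<^sub>C y" by simp
      ultimately show "(norm (w - X n))^2 - 1 / real (Suc n) \<le> (norm ((w - X n) + t *\<^sub>C y))^2"
        using X(2)[of n] by simp
    qed
    have "(\<lambda>n. sqrt ((norm y)^2 * inverse (real (Suc n)))) \<longlonglongrightarrow> sqrt ((norm y)^2 * 0)"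
      by (intro tendsto_real_sqrt tendsto_mult tendsto_const LIMSEQ_inverse_real_of_nat)
    then have l0: "(\<lambda>n. sqrt ((norm y)^2 * inverse (real (Suc n)))) \<longlonglongrightarrow> 0" by simp
    have "(\<lambda>n. cinner y (w - X n)) \<longlonglongrightarrow> 0"
    proof (rule Lim_null_comparison[OF _ l0])
      show "\<forall>\<^sub>F n in sequentially. norm (cinner y (w - X n)) \<le> sqrt ((norm y)^2 * inverse (real (Suc n)))"
        using bnd by (intro always_eventually allI real_le_rsqrt) (simp add: field_simps)
    qed
    from LIMSEQ_unique[OF l1 this] show ?thesis .
  qed
  with pM show ?thesis by blast
qed

lemma riesz:
  fixes f :: "'a::chilbert_space \<Rightarrow> complex"
  assumes bl: "bounded_linear f" and hom: "\<And>c x. f (c *\<^sub>C x) = c * f x"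
  shows "\<exists>z. \<forall>x. f x = cinner z x"
proof (cases "\<forall>x. f x = 0")
  case True then show ?thesis by (intro exI[of _ 0]) simp
next
  case False
  then obtain w where w: "f w \<noteq> 0" by blast
  interpret f: bounded_linear f by (rule bl)
  define N where "N = {x. f x = 0}"
  have N: "csubspace N" unfolding csubspace_def N_def by (auto simp: f.add hom)
  have cN: "closed N" unfolding N_def
    by (rule closed_Collect_eq) (auto intro: linear_continuous_on bl)
  obtain p where p: "p \<in> N" "\<And>y. y \<in> N \<Longrightarrow> cinner y (w - p) = 0"
    using projection[OF N, of w] closure_closed[OF cN] by auto
  define z where "z = w - p"
  have fz: "f z \<noteq> 0" using p(1) w by (simp add: z_def f.diff N_def)
  have z0: "z \<noteq> 0" using fz by auto
  have nz: "cinner z z \<noteq> 0" using z0 by (simp add: cinner_self_eq_0)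
  show ?thesis
  proof (intro exI allI)
    fix x
    have "f x *\<^sub>C z - f z *\<^sub>C x \<in> N" by (simp add: N_def f.diff hom)
    then have "cinner (f x *\<^sub>C z - f z *\<^sub>C x) z = 0" using p(2) z_def by blast
    then have "cnj (f x) * cinner z z = cnj (f z) * cinner x z"
      by (simp add: cinner_diff_left cinner_scaleC_left)
    then have "f x * cinner z z = f z * cinner z x"
      by (metis cinner_commute complex_cnj_cnj complex_cnj_mult)
    then have "f x = (f z / cinner z z) * cinner z x" using nz by (simp add: field_simps)
    then show "f x = cinner (cnj (f z / cinner z z) *\<^sub>C z) x"
      by (simp add: cinner_scaleC_left)
  qed
qed

locale setup_U =
  fixes A :: "'a::chilbert_space \<Rightarrow> 'a" and Dom U
  assumes SA: "self_adjoint A Dom" and Uu: "unitary U" and C: "C1 A Dom U"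
begin

definition "B = commutator A Dom U"

lemma B_bcl: "bounded_clinear B" unfolding B_def by (rule commutator_props(1)[OF SA C])
lemma B_id: "x \<in> Dom \<Longrightarrow> y \<in> Dom \<Longrightarrow> cinner x (B y) = cinner (A x) (U y) - cinner x (U (A y))"
  unfolding B_def by (rule commutator_props(2)[OF SA C])

lemmas sa = sa_props[OF SA]

lemma inv_Dom: assumes x: "x \<in> Dom" shows "inv U x \<in> Dom"
proof -
  have bl: "bounded_linear (\<lambda>z. cinner x (B z))"
    by (rule bounded_linear_compose[OF bl_cinner_right bcl_bl[OF B_bcl]])
  obtain \<zeta> where \<zeta>: "\<And>z. cinner x (B z) = cinner \<zeta> z"
    using riesz[OF bl] by (metis bcl_scaleC[OF B_bcl] cinner_scaleC_right)
  have "\<forall>z\<in>Dom. cinner (inv U x) (A z) = cinner (inv U (A x) - \<zeta>) z"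
  proof
    fix z assume z: "z \<in> Dom"
    have "cinner (inv U x) (A z) = cinner x (U (A z))" by (rule unitary_adj1[OF Uu])
    also have "\<dots> = cinner (A x) (U z) - cinner x (B z)" using B_id[OF x z] by simp
    also have "\<dots> = cinner (inv U (A x) - \<zeta>) z"
      by (simp add: \<zeta> cinner_diff_left unitary_adj1[OF Uu])
    finally show "cinner (inv U x) (A z) = cinner (inv U (A x) - \<zeta>) z" .
  qed
  then show ?thesis using sa(5) by blast
qed

lemma sym_Dom: assumes x: "x \<in> Dom" and y: "y \<in> Dom"
  shows "cinner (B (inv U x)) y = cinner x (B (inv U y))"
proof -
  define u where "u = inv U x"
  define v where "v = inv U y"
  have u: "u \<in> Dom" and v: "v \<in> Dom" using inv_Dom x y by (auto simp: u_def v_def)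
  have Uu': "U u = x" and Uv: "U v = y" by (auto simp: u_def v_def unitary_inv_right[OF Uu])
  have r: "cinner x (B v) = cinner (A x) y - cinner u (A v)"
    using B_id[OF x v] by (simp add: Uv u_def unitary_adj1[OF Uu])
  have "cinner y (B u) = cinner (A y) x - cinner v (A u)"
    using B_id[OF y u] by (simp add: Uu' v_def unitary_adj1[OF Uu])
  then have "cinner (B u) y = cnj (cinner (A y) x - cinner v (A u))"
    by (metis cinner_commute)
  also have "\<dots> = cinner x (A y) - cinner (A u) v"
    by (metis cinner_commute complex_cnj_diff)
  also have "\<dots> = cinner (A x) y - cinner u (A v)" using sa(6) x y u v by simp
  finally show ?thesis using r by (simp add: u_def v_def)
qed

lemma sym: assumes x: "x \<in> Dom"
  shows "cinner (B (inv U x)) y = cinner x (B (inv U y))"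
proof -
  have "cinner (B (inv U x)) y - cinner x (B (inv U y)) = 0"
  proof (rule dense_zero[OF sa(2), where f="\<lambda>y. cinner (B (inv U x)) y - cinner x (B (inv U y))"])
    show "bounded_linear (\<lambda>y. cinner (B (inv U x)) y - cinner x (B (inv U y)))"
      by (intro bounded_linear_sub bl_cinner_right bounded_linear_compose[OF bl_cinner_right]
          bounded_linear_compose[OF bcl_bl[OF B_bcl]] bcl_bl[OF unitary_inv_bcl[OF Uu]])
  qed (use sym_Dom x in auto)
  then show ?thesis by simp
qed

end

lemma approx0:
  fixes f :: "'j \<Rightarrow> complex"
  assumes "\<And>e. e > 0 \<Longrightarrow> \<exists>g. (g \<longlongrightarrow> 0) F \<and> (\<forall>j. norm (f j - g j) \<le> e)"
  shows "(f \<longlongrightarrow> 0) F"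
  unfolding tendsto_iff
proof (intro allI impI)
  fix e :: real assume e: "e > 0"
  obtain g where g: "(g \<longlongrightarrow> 0) F" "\<And>j. norm (f j - g j) \<le> e/2"
    using assms[of "e/2"] e by auto
  have "eventually (\<lambda>j. dist (g j) 0 < e/2) F" using g(1)[unfolded tendsto_iff, rule_format, of "e/2"] e by simp
  then show "eventually (\<lambda>j. dist (f j) 0 < e) F"
  proof (rule eventually_mono)
    fix j assume "dist (g j) 0 < e/2"
    moreover have "norm (f j) \<le> norm (f j - g j) + norm (g j)" using norm_triangle_ineq[of "f j - g j" "g j"] by simp
    ultimately show "dist (f j) 0 < e" using g(2)[of j] by simp
  qed
qed

lemma eventually_net:
  assumes "directed_set le"
  shows "eventually P (net le) \<longleftrightarrow> (\<exists>k. \<forall>j. le k j \<longrightarrow> P j)"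
proof -
  have "eventually P (INF k. principal {j. le k j}) \<longleftrightarrow> (\<exists>k\<in>UNIV. eventually P (principal {j. le k j}))"
  proof (rule eventually_INF_base)
    fix a b :: 'a
    obtain c where c: "le a c" "le b c" using assms unfolding directed_set_def by blast
    have "{j. le c j} \<subseteq> {j. le a j} \<inter> {j. le b j}"
      using assms c unfolding directed_set_def by blast
    then show "\<exists>x\<in>UNIV. principal {j. le x j} \<le> inf (principal {j. le a j}) (principal {j. le b j})"
      by (auto simp: inf_principal)
  qed simp
  then show ?thesis unfolding net_def by (simp add: eventually_principal)
qed

lemma net_not_bot: assumes d: "directed_set le" shows "net le \<noteq> bot"
proof
  assume "net le = bot"
  then have "eventually (\<lambda>_. False) (net le)" by simp
  then obtain k where "\<forall>j. le k j \<longrightarrow> False" unfolding eventually_net[OF d] by blast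
  moreover have "le k k" using d unfolding directed_set_def by blast
  ultimately show False by blast
qed

theorem proposition2p1:
  fixes le :: "'j \<Rightarrow> 'j \<Rightarrow> bool"
    and U :: "'j \<Rightarrow> 'h::chilbert_space \<Rightarrow> 'h"
    and ell :: "'j \<Rightarrow> real"
    and A :: "'h \<Rightarrow> 'h" and domA :: "'h set"
    and D :: "'h \<Rightarrow> 'h"
  assumes "directed_set le"
    and "\<And>j. unitary (U j)"
    and "\<And>j. ell j \<ge> 0"
    and "filterlim ell at_top (net le)"
    and "self_adjoint A domA"
    and "\<And>j. C1 A domA (U j)"
    and "\<And>\<psi>. ((\<lambda>j. complex_of_real (1 / ell j) *\<^sub>C
                  commutator A domA (U j) (inv (U j) \<psi>)) \<longlongrightarrow> D \<psi>) (net le)"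
  shows "\<forall>\<phi>\<in>orth_compl {x. D x = 0}. \<forall>\<psi>.
           ((\<lambda>j. cinner \<phi> (U j \<psi>)) \<longlongrightarrow> 0) (net le)"
proof -
  define F where "F = net le"
  have nb: "F \<noteq> bot" unfolding F_def by (rule net_not_bot[OF assms(1)])
  note sa = sa_props[OF assms(5)]
  define C where "C j = commutator A domA (U j)" for j
  define Dj where "Dj j x = complex_of_real (1 / ell j) *\<^sub>C C j (inv (U j) x)" for j x
  have hyp: "((\<lambda>j. Dj j x) \<longlongrightarrow> D x) F" for x
    using assms(7)[of x] by (simp add: Dj_def C_def F_def)
  have Cbcl: "bounded_clinear (C j)" for j
    unfolding C_def by (rule commutator_props(1)[OF assms(5) assms(6)])
  have Cid: "cinner x (C j y) = cinner (A x) (U j y) - cinner x (U j (A y))"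
    if "x \<in> domA" "y \<in> domA" for x y j
    unfolding C_def by (rule commutator_props(2)[OF assms(5) assms(6) that])
  have su: "setup_U A domA (U j)" for j
    by unfold_locales (use assms in auto)
  have symC: "cinner (C j (inv (U j) x)) y = cinner x (C j (inv (U j) y))" if "x \<in> domA" for x y j
    using setup_U.sym[OF su that] setup_U.B_def[OF su] by (simp add: C_def)
  have invbcl: "bounded_clinear (inv (U j))" for j by (rule unitary_inv_bcl[OF assms(2)])
  have Dj_add: "Dj j (x + y) = Dj j x + Dj j y" for j x y
    by (simp add: Dj_def bcl_add[OF invbcl] bcl_add[OF Cbcl] scaleC_add_right)
  have Dj_scale: "Dj j (c *\<^sub>C x) = c *\<^sub>C Dj j x" for j c x
    by (simp add: Dj_def bcl_scaleC[OF invbcl] bcl_scaleC[OF Cbcl] scaleC_scaleC mult.commute)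
  have D_add: "D (x + y) = D x + D y" for x y
  proof (rule tendsto_unique[OF nb hyp])
    show "((\<lambda>j. Dj j (x + y)) \<longlongrightarrow> D x + D y) F"
      unfolding Dj_add by (intro tendsto_add hyp)
  qed
  have D_scale: "D (c *\<^sub>C x) = c *\<^sub>C D x" for c x
  proof (rule tendsto_unique[OF nb hyp])
    show "((\<lambda>j. Dj j (c *\<^sub>C x)) \<longlongrightarrow> c *\<^sub>C D x) F"
      unfolding Dj_scale by (rule bounded_linear.tendsto[OF bl_scaleC hyp])
  qed
  have Dj_sym: "cinner (Dj j x) y = cinner x (Dj j y)" if "x \<in> domA" for j x y
    using symC[OF that, of j y] by (simp add: Dj_def cinner_scaleC_left cinner_scaleC_right)
  have D_sym: "cinner (D x) y = cinner x (D y)" if x: "x \<in> domA" for x y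
  proof (rule tendsto_unique[OF nb])
    show "((\<lambda>j. cinner (Dj j x) y) \<longlongrightarrow> cinner (D x) y) F"
      by (rule bounded_linear.tendsto[OF bl_cinner_left hyp])
    show "((\<lambda>j. cinner (Dj j x) y) \<longlongrightarrow> cinner x (D y)) F"
      unfolding Dj_sym[OF x] by (rule bounded_linear.tendsto[OF bl_cinner_right hyp])
  qed
  have step3: "((\<lambda>j. cinner (D \<eta>) (U j \<psi>)) \<longlongrightarrow> 0) F" if \<eta>: "\<eta> \<in> domA" and \<psi>: "\<psi> \<in> domA" for \<eta> \<psi>
  proof -
    define K where "K = norm (A \<eta>) * norm \<psi> + norm \<eta> * norm (A \<psi>)"
    have key: "cinner (Dj j \<eta>) (U j \<psi>) =
        complex_of_real (1 / ell j) * (cinner (A \<eta>) (U j \<psi>) - cinner \<eta> (U j (A \<psi>)))" for j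
      using Dj_sym[OF \<eta>, of j "U j \<psi>"] Cid[OF \<eta> \<psi>, of j]
      by (simp add: Dj_def cinner_scaleC_right unitary_inv_left[OF assms(2)])
    have b1: "norm (cinner (Dj j \<eta>) (U j \<psi>)) \<le> (1 / ell j) * K" for j
    proof -
      have "cmod (cinner (A \<eta>) (U j \<psi>) - cinner \<eta> (U j (A \<psi>)))
          \<le> cmod (cinner (A \<eta>) (U j \<psi>)) + cmod (cinner \<eta> (U j (A \<psi>)))" by (rule norm_triangle_ineq4)
      also have "\<dots> \<le> K" unfolding K_def
        using cauchy_schwarz[of "A \<eta>" "U j \<psi>"] cauchy_schwarz[of \<eta> "U j (A \<psi>)"]
        by (simp add: unitary_norm[OF assms(2)])
      finally have "cmod (cinner (A \<eta>) (U j \<psi>) - cinner \<eta> (U j (A \<psi>))) \<le> K" .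
      moreover have "1 / ell j \<ge> 0" using assms(3)[of j] by simp
      moreover have c: "cmod (complex_of_real (1 / ell j)) = 1 / ell j"
        by (simp only: norm_of_real) (use assms(3)[of j] in simp)
      ultimately show ?thesis unfolding key norm_mult c
        by (simp add: divide_right_mono)
    qed
    have b2: "norm (cinner (D \<eta> - Dj j \<eta>) (U j \<psi>)) \<le> norm (Dj j \<eta> - D \<eta>) * norm \<psi>" for j
      using cauchy_schwarz[of "D \<eta> - Dj j \<eta>" "U j \<psi>"]
      by (simp add: unitary_norm[OF assms(2)] norm_minus_commute)
    have bnd: "norm (cinner (D \<eta>) (U j \<psi>)) \<le> (1 / ell j) * K + norm (Dj j \<eta> - D \<eta>) * norm \<psi>" for j
    proof -
      have "cinner (D \<eta>) (U j \<psi>) = cinner (Dj j \<eta>) (U j \<psi>) + cinner (D \<eta> - Dj j \<eta>) (U j \<psi>)"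
        by (simp add: cinner_diff_left)
      then have "norm (cinner (D \<eta>) (U j \<psi>)) \<le> norm (cinner (Dj j \<eta>) (U j \<psi>)) + norm (cinner (D \<eta> - Dj j \<eta>) (U j \<psi>))"
        by (metis norm_triangle_ineq)
      then show ?thesis using b1[of j] b2[of j] by simp
    qed
    have l1: "((\<lambda>j. 1 / ell j) \<longlongrightarrow> 0) F"
      using tendsto_inverse_0_at_top[OF assms(4)] by (simp add: F_def inverse_eq_divide)
    have l2: "((\<lambda>j. norm (Dj j \<eta> - D \<eta>)) \<longlongrightarrow> 0) F"
      by (rule tendsto_norm_zero[OF LIM_zero[OF hyp]])
    have "((\<lambda>j. (1 / ell j) * K + norm (Dj j \<eta> - D \<eta>) * norm \<psi>) \<longlongrightarrow> 0 * K + 0 * norm \<psi>) F"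
      by (intro tendsto_add tendsto_mult l1 l2 tendsto_const)
    then have "((\<lambda>j. (1 / ell j) * K + norm (Dj j \<eta> - D \<eta>) * norm \<psi>) \<longlongrightarrow> 0) F" by simp
    then show ?thesis by (rule Lim_null_comparison[OF always_eventually[OF allI[OF bnd]]])
  qed
  have step4: "((\<lambda>j. cinner (D \<eta>) (U j \<psi>)) \<longlongrightarrow> 0) F" if \<eta>: "\<eta> \<in> domA" for \<eta> \<psi>
  proof (rule approx0)
    fix e :: real assume e: "e > 0"
    define n where "n = norm (D \<eta>)"
    have "\<psi> \<in> closure domA" using sa(2) by simp
    then obtain \<psi>' where \<psi>': "\<psi>' \<in> domA" "dist \<psi>' \<psi> < e / (n + 1)"
      unfolding closure_approachable using e by (metis add_nonneg_pos divide_pos_pos n_def norm_ge_zero zero_less_one)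
    have d: "(n + 1) * norm (\<psi> - \<psi>') < e" using \<psi>'(2)
      by (simp add: dist_norm norm_minus_commute less_divide_eq mult.commute n_def add_nonneg_pos)
    have "norm (cinner (D \<eta>) (U j \<psi>) - cinner (D \<eta>) (U j \<psi>')) \<le> e" for j
    proof -
      have "cinner (D \<eta>) (U j \<psi>) - cinner (D \<eta>) (U j \<psi>') = cinner (D \<eta>) (U j (\<psi> - \<psi>'))"
        by (simp add: cinner_diff_right bcl_diff[OF unitary_bcl[OF assms(2)]])
      also have "norm \<dots> \<le> n * norm (\<psi> - \<psi>')"
        using cauchy_schwarz[of "D \<eta>" "U j (\<psi> - \<psi>')"] by (simp add: unitary_norm[OF assms(2)] n_def)
      also have "\<dots> \<le> (n + 1) * norm (\<psi> - \<psi>')" by (simp add: distrib_right)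
      finally show ?thesis using d by simp
    qed
    then show "\<exists>g. (g \<longlongrightarrow> 0) F \<and> (\<forall>j. norm (cinner (D \<eta>) (U j \<psi>) - g j) \<le> e)"
      using step3[OF \<eta> \<psi>'(1)] by blast
  qed
  define M where "M = D ` domA"
  have D0: "D 0 = 0" using D_add[of 0 0] by simp
  have Msub: "csubspace M" unfolding csubspace_def M_def
  proof (intro conjI ballI allI)
    show "0 \<in> D ` domA" using csub_zero[OF sa(1)] D0 by (metis image_eqI)
  next
    fix x y assume "x \<in> D ` domA" "y \<in> D ` domA"
    then show "x + y \<in> D ` domA" using csub_add[OF sa(1)] D_add by (metis (no_types, lifting) image_iff)
  next
    fix c x assume "x \<in> D ` domA"
    then show "c *\<^sub>C x \<in> D ` domA" using csub_scaleC[OF sa(1)] D_scale by (metis (no_types, lifting) image_iff)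
  qed
  have inM: "\<phi> \<in> closure M" if \<phi>: "\<phi> \<in> orth_compl {x. D x = 0}" for \<phi>
  proof -
    obtain p where p: "p \<in> closure M" "\<And>y. y \<in> M \<Longrightarrow> cinner y (\<phi> - p) = 0"
      using projection[OF Msub, of \<phi>] by blast
    have "D (\<phi> - p) = 0"
    proof (rule dense_orth[OF sa(2)])
      fix x assume x: "x \<in> domA"
      have "cinner x (D (\<phi> - p)) = cinner (D x) (\<phi> - p)" using D_sym[OF x] by simp
      also have "\<dots> = 0" using p(2) x by (simp add: M_def)
      finally show "cinner x (D (\<phi> - p)) = 0" .
    qed
    then have o1: "cinner (\<phi> - p) \<phi> = 0" using \<phi> unfolding orth_compl_def by blast
    have o2: "cinner p (\<phi> - p) = 0"
      by (rule continuous_constant_on_closure[of M "\<lambda>z. cinner z (\<phi> - p)" 0 p])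
         (use p linear_continuous_on[OF bl_cinner_left] in auto)
    have "cinner (\<phi> - p) (\<phi> - p) = cinner (\<phi> - p) \<phi> - cnj (cinner p (\<phi> - p))"
      by (simp add: cinner_diff_right cinner_commute[of "\<phi> - p" p])
    then have "cinner (\<phi> - p) (\<phi> - p) = 0" using o1 o2 by simp
    then have "\<phi> = p" by (simp add: cinner_self_eq_0)
    then show ?thesis using p(1) by simp
  qed
  show ?thesis unfolding F_def[symmetric]
  proof (intro ballI allI)
    fix \<phi> \<psi> assume \<phi>: "\<phi> \<in> orth_compl {x. D x = 0}"
    show "((\<lambda>j. cinner \<phi> (U j \<psi>)) \<longlongrightarrow> 0) F"
    proof (rule approx0)
      fix e :: real assume e: "e > 0"
      define n where "n = norm \<psi>"
      obtain x where x: "x \<in> M" "dist x \<phi> < e / (n + 1)"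
        using inM[OF \<phi>] unfolding closure_approachable using e
        by (metis add_nonneg_pos divide_pos_pos n_def norm_ge_zero zero_less_one)
      obtain \<eta> where \<eta>: "\<eta> \<in> domA" "x = D \<eta>" using x(1) M_def by blast
      have d: "(n + 1) * norm (\<phi> - x) < e" using x(2)
        by (simp add: dist_norm norm_minus_commute less_divide_eq mult.commute n_def add_nonneg_pos)
      have "norm (cinner \<phi> (U j \<psi>) - cinner x (U j \<psi>)) \<le> e" for j
      proof -
        have "cinner \<phi> (U j \<psi>) - cinner x (U j \<psi>) = cinner (\<phi> - x) (U j \<psi>)"
          by (simp add: cinner_diff_left)
        also have "norm \<dots> \<le> norm (\<phi> - x) * n"
          using cauchy_schwarz[of "\<phi> - x" "U j \<psi>"] by (simp add: unitary_norm[OF assms(2)] n_def)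
        also have "\<dots> \<le> (n + 1) * norm (\<phi> - x)" by (simp add: distrib_right mult.commute)
        finally show ?thesis using d by simp
      qed
      then show "\<exists>g. (g \<longlongrightarrow> 0) F \<and> (\<forall>j. norm (cinner \<phi> (U j \<psi>) - g j) \<le> e)"
        using step4[OF \<eta>(1), of \<psi>] \<eta>(2) by blast
    qed
  qed
qed

end
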